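(* Let $L$ be a shift having left special factors of arbitrarily large length, and let $\mu$ be a $\sigma$-invariant, nonatomic, regular Borel probability measure on $L$, positive on nonempty cylinders, with $\mu(SP_L)=0$. For each $k>0$ let $I^{(k)}_L=\{x\in I:\phi^{-1}(\iota(x))\in Cyl_L(v^{(k)})\}$, where $I=[0,1)$. Then each $I^{(k)}_L$ is a right-open interval, and $T_L$ is a translation on it: there is a constant $c_k$ with $T_L(x)=x+c_k$ for all $x\in I^{(k)}_L$.
   Context: $A$ is a finite totally ordered alphabet. $A^{\mathbb N}$ has the lexicographic order and the Cantor topology, and $\sigma$ deletes the first letter. A shift is a closed $L\subseteq A^{\mathbb N}$ with $\sigma(L)\subseteq L$. $Fact_L$ is the set of finite factors, and $Cyl_L(v)=\{w\in L:v\text{ prefix of }w\}$. For $w\le w'$ in $L$, $[w,w']=\{w''\in L:w\le w''\le w'\}$, and $w_{L,min}=\min L$. A factor $u$ is left special if $bu\in Fact_L$ for at least two letters $b$. $SP_L$ is the set of infinite words all of whose prefixes are left special. $\{v^{(k)}\}_{k>0}$ enumerates the words $au\in Fact_L$ ($a\in A$, $u$ nonempty) with $u$ not left special and every nonempty proper prefix of $u$ left special. Construction. Put $\phi_\mu(w)=\mu([w_{L,min},w])$. Let $Z_0$ be the set of $x\in[0,1]$ with $|\phi_\mu^{-1}(x)|\ge 2$; each such preimage consists of exactly two consecutive words. Let $\hat I=[0,1]\sqcup Z_0^-$, where $Z_0^-=\{z^-:z\in Z_0\}$ is a disjoint copy of $Z_0$. Order $\hat I$ so that $z^-<z$ with nothing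 in between, extending the order of $[0,1]$, and give it the order topology. Let $\iota$ be the inclusion $[0,1]\to\hat I$, and let $\kappa:\hat I\to[0,1]$ be the identity on $[0,1]$ with $z^-\mapsto z$. Define $\phi(w)=(\phi_\mu(w))^-$ if $\phi_\mu^{-1}(\phi_\mu(w))=\{w,w'\}$ with $w<w'$, and $\phi(w)=\phi_\mu(w)$ otherwise. Set $\hat T=\phi\circ\sigma\circ\phi^{-1}$ and $T_L=\kappa\circ\hat T\circ\iota:[0,1]\to[0,1]$. *)

theory Defs
  imports "HOL-Probability.Probability"
begin

definition shiftmap :: "(nat \<Rightarrow> 'a) \<Rightarrow> (nat \<Rightarrow> 'a)" where
  "shiftmap w = (\<lambda>n. w (Suc n))"

definition lex_less :: "(nat \<Rightarrow> 'a::linorder) \<Rightarrow> (nat \<Rightarrow> 'a) \<Rightarrow> bool" where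
  "lex_less w w' \<longleftrightarrow> (\<exists>n. (\<forall>i<n. w i = w' i) \<and> w n < w' n)"

definition lex_le :: "(nat \<Rightarrow> 'a::linorder) \<Rightarrow> (nat \<Rightarrow> 'a) \<Rightarrow> bool" where
  "lex_le w w' \<longleftrightarrow> lex_less w w' \<or> w = w'"

definition cantor_closed :: "(nat \<Rightarrow> 'a) set \<Rightarrow> bool" where
  "cantor_closed L \<longleftrightarrow> (\<forall>w. (\<forall>n. \<exists>w'\<in>L. \<forall>i<n. w' i = w i) \<longrightarrow> w \<in> L)"

definition is_shift :: "(nat \<Rightarrow> 'a) set \<Rightarrow> bool" where
  "is_shift L \<longleftrightarrow> cantor_closed L \<and> shiftmap ` L \<subseteq> L"

definition Fact :: "(nat \<Rightarrow> 'a) set \<Rightarrow> 'a list set" where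
  "Fact L = {u. \<exists>w\<in>L. \<exists>n. u = map w [n..<n + length u]}"

definition Cyl :: "(nat \<Rightarrow> 'a) set \<Rightarrow> 'a list \<Rightarrow> (nat \<Rightarrow> 'a) set" where
  "Cyl L v = {w\<in>L. \<forall>i<length v. w i = v ! i}"

definition left_special :: "(nat \<Rightarrow> 'a) set \<Rightarrow> 'a list \<Rightarrow> bool" where
  "left_special L u \<longleftrightarrow> (\<exists>b c. b \<noteq> c \<and> b # u \<in> Fact L \<and> c # u \<in> Fact L)"

definition SP :: "(nat \<Rightarrow> 'a) set \<Rightarrow> (nat \<Rightarrow> 'a) set" where
  "SP L = {w. \<forall>n. left_special L (map w [0..<n])}"

text \<open>The set of the words v^(k): au in Fact_L, u nonempty, u not left special, every
  nonempty proper prefix of u left special.\<close>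
definition Vwords :: "(nat \<Rightarrow> 'a) set \<Rightarrow> 'a list set" where
  "Vwords L = {a # u | a u. a # u \<in> Fact L \<and> u \<noteq> [] \<and> \<not> left_special L u \<and>
      (\<forall>m. 0 < m \<and> m < length u \<longrightarrow> left_special L (take m u))}"

definition lexmin :: "(nat \<Rightarrow> 'a::linorder) set \<Rightarrow> (nat \<Rightarrow> 'a)" where
  "lexmin L = (THE w. w \<in> L \<and> (\<forall>w'\<in>L. lex_le w w'))"

text \<open>Borel measures on L: the Borel sigma-algebra of L (Cantor topology) is generated by
  the cylinders Cyl_L(v).\<close>
definition borel_on :: "(nat \<Rightarrow> 'a) set \<Rightarrow> (nat \<Rightarrow> 'a) measure \<Rightarrow> bool" where
  "borel_on L \<mu> \<longleftrightarrow> space \<mu> = L \<and> sets \<mu> = sigma_sets L (range (Cyl L))"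

definition phi_mu :: "(nat \<Rightarrow> 'a) measure \<Rightarrow> (nat \<Rightarrow> 'a::linorder) set \<Rightarrow> (nat \<Rightarrow> 'a) \<Rightarrow> real" where
  "phi_mu \<mu> L w = measure \<mu> {w''\<in>L. lex_le (lexmin L) w'' \<and> lex_le w'' w}"

text \<open>The extended interval I-hat = [0,1] disjoint-union Z_0^- is encoded as real * bool:
  (x, False) is the point x of [0,1] (so iota x = (x, False)), and (z, True) is z^-.
  kappa is fst.\<close>
definition phi_hat :: "(nat \<Rightarrow> 'a) measure \<Rightarrow> (nat \<Rightarrow> 'a::linorder) set \<Rightarrow> (nat \<Rightarrow> 'a) \<Rightarrow> real \<times> bool" where
  "phi_hat \<mu> L w = (phi_mu \<mu> L w,
      (\<exists>w'\<in>L. lex_less w w' \<and> phi_mu \<mu> L w' = phi_mu \<mu> L w))"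

definition phi_inv :: "(nat \<Rightarrow> 'a) measure \<Rightarrow> (nat \<Rightarrow> 'a::linorder) set \<Rightarrow> real \<times> bool \<Rightarrow> (nat \<Rightarrow> 'a)" where
  "phi_inv \<mu> L p = (THE w. w \<in> L \<and> phi_hat \<mu> L w = p)"

definition T_L :: "(nat \<Rightarrow> 'a) measure \<Rightarrow> (nat \<Rightarrow> 'a::linorder) set \<Rightarrow> real \<Rightarrow> real" where
  "T_L \<mu> L x = fst (phi_hat \<mu> L (shiftmap (phi_inv \<mu> L (x, False))))"

definition I_k :: "(nat \<Rightarrow> 'a) measure \<Rightarrow> (nat \<Rightarrow> 'a::linorder) set \<Rightarrow> 'a list \<Rightarrow> real set" where
  "I_k \<mu> L v = {x \<in> {0..<1}. phi_inv \<mu> L (x, False) \<in> Cyl L v}"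

end

theory Submission
  imports Defs
begin


lemma lex_less_irrefl: "\<not> lex_less w w"
  by (auto simp: lex_less_def)

lemma lex_less_trans:
  assumes "lex_less (u::nat\<Rightarrow>'a::linorder) v" "lex_less v w" shows "lex_less u w"
proof -
  obtain n where n: "\<forall>i<n. u i = v i" "u n < v n" using assms(1) by (auto simp: lex_less_def)
  obtain m where m: "\<forall>i<m. v i = w i" "v m < w m" using assms(2) by (auto simp: lex_less_def)
  show ?thesis
  proof (cases "n < m")
    case True
    then show ?thesis using n m unfolding lex_less_def
      by (intro exI[of _ n]) auto
  next
    case False
    then consider "m < n" | "m = n" by linarith
    then show ?thesis
    proof cases
      case 1 then show ?thesis using n m unfolding lex_less_def
        by (intro exI[of _ m]) auto
    next
      case 2 then show ?thesis using n m unfolding lex_less_def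
        by (intro exI[of _ m]) auto
    qed
  qed
qed

lemma lex_less_total:
  assumes "(w::nat\<Rightarrow>'a::linorder) \<noteq> w'" shows "lex_less w w' \<or> lex_less w' w"
proof -
  have "\<exists>i. w i \<noteq> w' i" using assms by auto
  define n where "n = (LEAST i. w i \<noteq> w' i)"
  have 1: "w n \<noteq> w' n" unfolding n_def by (rule LeastI_ex) fact
  have 2: "\<forall>i<n. w i = w' i" unfolding n_def using not_less_Least by blast
  show ?thesis
  proof (cases "w n < w' n")
    case True then show ?thesis using 2 unfolding lex_less_def by blast
  next
    case False then have "w' n < w n" using 1 by auto
    then show ?thesis using 2 unfolding lex_less_def by (metis)
  qed
qed

lemma lex_less_asym: "lex_less w w' \<Longrightarrow> \<not> lex_less w' w"
  using lex_less_trans lex_less_irrefl by blast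

lemma lex_le_trans: "lex_le u v \<Longrightarrow> lex_le v w \<Longrightarrow> lex_le u w"
  unfolding lex_le_def using lex_less_trans by blast

lemma lex_le_antisym: "lex_le u v \<Longrightarrow> lex_le v u \<Longrightarrow> u = v"
  unfolding lex_le_def using lex_less_asym by blast

lemma lex_le_total: "lex_le u v \<or> lex_le v u"
  unfolding lex_le_def using lex_less_total by blast

lemma not_lex_le: "\<not> lex_le u v \<longleftrightarrow> lex_less v u"
  unfolding lex_le_def using lex_less_total lex_less_asym lex_less_irrefl by blast

definition agr :: "(nat \<Rightarrow> 'a) \<Rightarrow> 'a list \<Rightarrow> bool" where
  "agr w p \<longleftrightarrow> (\<forall>i<length p. w i = p ! i)"

definition ltp :: "(nat \<Rightarrow> 'a::linorder) \<Rightarrow> 'a list \<Rightarrow> bool" where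
  "ltp w p \<longleftrightarrow> (\<exists>i<length p. (\<forall>j<i. w j = p ! j) \<and> w i < p ! i)"

definition gtp :: "(nat \<Rightarrow> 'a::linorder) \<Rightarrow> 'a list \<Rightarrow> bool" where
  "gtp w p \<longleftrightarrow> (\<exists>i<length p. (\<forall>j<i. w j = p ! j) \<and> w i > p ! i)"

lemma agr_Nil[simp]: "agr w []" by (simp add: agr_def)
lemma ltp_Nil[simp]: "\<not> ltp w []" by (simp add: ltp_def)
lemma gtp_Nil[simp]: "\<not> gtp w []" by (simp add: gtp_def)

lemma agr_snoc: "agr w (p @ [c]) \<longleftrightarrow> agr w p \<and> w (length p) = c"
  unfolding agr_def by (auto simp: nth_append less_Suc_eq)

lemma ltp_snoc: "ltp w (p @ [c]) \<longleftrightarrow> ltp w p \<or> (agr w p \<and> w (length p) < c)"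
proof
  assume "ltp w (p @ [c])"
  then obtain i where i: "i < Suc (length p)" "\<forall>j<i. w j = (p@[c]) ! j" "w i < (p@[c]) ! i"
    by (auto simp: ltp_def)
  show "ltp w p \<or> (agr w p \<and> w (length p) < c)"
  proof (cases "i < length p")
    case True
    then have "ltp w p" using i unfolding ltp_def by (intro exI[of _ i]) (auto simp: nth_append)
    then show ?thesis by simp
  next
    case False
    then have "i = length p" using i by simp
    then show ?thesis using i by (auto simp: agr_def nth_append)
  qed
next
  assume "ltp w p \<or> (agr w p \<and> w (length p) < c)"
  then show "ltp w (p @ [c])"
  proof
    assume "ltp w p"
    then obtain i where "i < length p" "\<forall>j<i. w j = p ! j" "w i < p ! i" by (auto simp: ltp_def)
    then show ?thesis unfolding ltp_def by (intro exI[of _ i]) (auto simp: nth_append)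
  next
    assume "agr w p \<and> w (length p) < c"
    then show ?thesis unfolding ltp_def agr_def by (intro exI[of _ "length p"]) (auto simp: nth_append)
  qed
qed

lemma gtp_snoc: "gtp w (p @ [c]) \<longleftrightarrow> gtp w p \<or> (agr w p \<and> w (length p) > c)"
proof
  assume "gtp w (p @ [c])"
  then obtain i where i: "i < Suc (length p)" "\<forall>j<i. w j = (p@[c]) ! j" "w i > (p@[c]) ! i"
    by (auto simp: gtp_def)
  show "gtp w p \<or> (agr w p \<and> w (length p) > c)"
  proof (cases "i < length p")
    case True
    then have "gtp w p" using i unfolding gtp_def by (intro exI[of _ i]) (auto simp: nth_append)
    then show ?thesis by simp
  next
    case False
    then have "i = length p" using i by simp
    then show ?thesis using i by (auto simp: agr_def nth_append)
  qed
next
  assume "gtp w p \<or> (agr w p \<and> w (length p) > c)"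
  then show "gtp w (p @ [c])"
  proof
    assume "gtp w p"
    then obtain i where "i < length p" "\<forall>j<i. w j = p ! j" "w i > p ! i" by (auto simp: gtp_def)
    then show ?thesis unfolding gtp_def by (intro exI[of _ i]) (auto simp: nth_append)
  next
    assume "agr w p \<and> w (length p) > c"
    then show ?thesis unfolding gtp_def agr_def by (intro exI[of _ "length p"]) (auto simp: nth_append)
  qed
qed

lemma trich: "(ltp w p \<or> agr w p \<or> gtp w p) \<and> \<not> (ltp w p \<and> agr w p) \<and> \<not> (ltp w p \<and> gtp w p)
   \<and> \<not> (agr w p \<and> gtp w p)"
proof (induction p rule: rev_induct)
  case Nil then show ?case by simp
next
  case (snoc c p)
  then show ?case unfolding ltp_snoc agr_snoc gtp_snoc by auto
qed

lemma ltp_agr_less: "ltp y p \<Longrightarrow> agr z p \<Longrightarrow> lex_less y z"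
proof -
  assume "ltp y p" "agr z p"
  then obtain i where i: "i < length p" "\<forall>j<i. y j = p ! j" "y i < p ! i" by (auto simp: ltp_def)
  show ?thesis unfolding lex_less_def
    using i \<open>agr z p\<close> by (intro exI[of _ i]) (auto simp: agr_def)
qed

lemma agr_gtp_less: "agr y p \<Longrightarrow> gtp z p \<Longrightarrow> lex_less y z"
proof -
  assume "agr y p" "gtp z p"
  then obtain i where i: "i < length p" "\<forall>j<i. z j = p ! j" "z i > p ! i" by (auto simp: gtp_def)
  show ?thesis unfolding lex_less_def
    using i \<open>agr y p\<close> by (intro exI[of _ i]) (auto simp: agr_def)
qed

lemma ltp_gtp_less: "ltp y p \<Longrightarrow> gtp z p \<Longrightarrow> lex_less y z"
proof -
  assume "ltp y p" "gtp z p"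
  then obtain i k where i: "i < length p" "\<forall>j<i. y j = p ! j" "y i < p ! i"
    and k: "k < length p" "\<forall>j<k. z j = p ! j" "z k > p ! k" by (auto simp: ltp_def gtp_def)
  consider "i < k" | "k < i" | "i = k" by linarith
  then show ?thesis
  proof cases
    case 1 then show ?thesis using i k unfolding lex_less_def by (intro exI[of _ i]) auto
  next
    case 2 then show ?thesis using i k unfolding lex_less_def by (intro exI[of _ k]) auto
  next
    case 3 then show ?thesis using i k unfolding lex_less_def by (intro exI[of _ i]) auto
  qed
qed

lemma lex_char:
  assumes P: "\<And>n. agr w (P n) \<and> length (P n) = n"
  shows "lex_less y w \<longleftrightarrow> (\<exists>n. ltp y (P n))"
    and "lex_le y w \<longleftrightarrow> (\<forall>n. ltp y (P n) \<or> agr y (P n))"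
proof -
  have A: "lex_less y w \<longleftrightarrow> (\<exists>n. ltp y (P n))"
  proof
    assume "lex_less y w"
    then obtain k where k: "\<forall>i<k. y i = w i" "y k < w k" by (auto simp: lex_less_def)
    have "ltp y (P (Suc k))" using P[of "Suc k"] k unfolding ltp_def agr_def
      by (intro exI[of _ k]) auto
    then show "\<exists>n. ltp y (P n)" by blast
  next
    assume "\<exists>n. ltp y (P n)"
    then show "lex_less y w" using ltp_agr_less P by blast
  qed
  then show "lex_less y w \<longleftrightarrow> (\<exists>n. ltp y (P n))" .
  show "lex_le y w \<longleftrightarrow> (\<forall>n. ltp y (P n) \<or> agr y (P n))"
  proof
    assume "lex_le y w"
    show "\<forall>n. ltp y (P n) \<or> agr y (P n)"
    proof
      fix n
      have "\<not> gtp y (P n)"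
        using P[of n] agr_gtp_less \<open>lex_le y w\<close> not_lex_le by blast
      then show "ltp y (P n) \<or> agr y (P n)" using trich by blast
    qed
  next
    assume H: "\<forall>n. ltp y (P n) \<or> agr y (P n)"
    show "lex_le y w"
    proof (rule ccontr)
      assume "\<not> lex_le y w"
      then have "lex_less w y" by (simp add: not_lex_le)
      then obtain k where k: "\<forall>i<k. w i = y i" "w k < y k" by (auto simp: lex_less_def)
      have "gtp y (P (Suc k))" using P[of "Suc k"] k unfolding gtp_def agr_def
        by (intro exI[of _ k]) auto
      then show False using H trich by blast
    qed
  qed
qed

lemma pre_P: "agr w (map w [0..<n]) \<and> length (map w [0..<n]) = n"
  by (simp add: agr_def)



primrec mp :: "(nat \<Rightarrow> 'a::{linorder,finite}) set \<Rightarrow> nat \<Rightarrow> 'a list" where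
  "mp S 0 = []"
| "mp S (Suc n) = mp S n @ [Min {c. \<exists>w\<in>S. agr w (mp S n @ [c])}]"

lemma mp_length[simp]: "length (mp S n) = n"
  by (induction n) auto

lemma mp_inv: "S \<noteq> {} \<Longrightarrow> \<exists>w\<in>S. agr w (mp S n)"
proof (induction n)
  case 0 then show ?case by auto
next
  case (Suc n)
  then obtain w where w: "w \<in> S" "agr w (mp S n)" by auto
  let ?C = "{c. \<exists>w\<in>S. agr w (mp S n @ [c])}"
  have "w n \<in> ?C" using w by (auto simp: agr_snoc)
  then have "?C \<noteq> {}" by auto
  then have "Min ?C \<in> ?C" by (intro Min_in) auto
  then show ?case by simp
qed

lemma mp_nth: "i < n \<Longrightarrow> mp S n ! i = mp S (Suc i) ! i"
proof (induction n)
  case 0 then show ?case by simp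
next
  case (Suc n)
  then show ?case
    by (cases "i < n") (auto simp: nth_append less_Suc_eq)
qed



lemma closed_min:
  fixes S :: "(nat \<Rightarrow> 'a::{linorder,finite}) set"
  assumes "cantor_closed S" "S \<noteq> {}" shows "\<exists>m\<in>S. \<forall>w\<in>S. lex_le m w"
proof -
  define m where "m = (\<lambda>i. mp S (Suc i) ! i)"
  have agrm: "agr m (mp S n)" for n
    unfolding agr_def mp_length
  proof (intro allI impI)
    fix i assume "i < n"
    then show "m i = mp S n ! i" unfolding m_def using mp_nth[of i n S] by simp
  qed
  have "\<forall>n. \<exists>w'\<in>S. \<forall>i<n. w' i = m i"
  proof
    fix n
    obtain w where "w \<in> S" "agr w (mp S n)" using mp_inv assms(2) by blast
    then show "\<exists>w'\<in>S. \<forall>i<n. w' i = m i" using agrm[of n] unfolding agr_def mp_length by metis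
  qed
  then have "m \<in> S" using assms(1) unfolding cantor_closed_def by blast
  moreover have "\<forall>w\<in>S. lex_le m w"
  proof
    fix w assume "w \<in> S"
    show "lex_le m w"
    proof (rule ccontr)
      assume "\<not> lex_le m w"
      then have "lex_less w m" by (simp add: not_lex_le)
      then obtain k where k: "\<forall>i<k. w i = m i" "w k < m k" by (auto simp: lex_less_def)
      have "agr w (mp S k)" using k(1) agrm[of k] unfolding agr_def mp_length by metis
      then have "w k \<in> {c. \<exists>w\<in>S. agr w (mp S k @ [c])}" using \<open>w \<in> S\<close> by (auto simp: agr_snoc)
      then have "Min {c. \<exists>w\<in>S. agr w (mp S k @ [c])} \<le> w k" by (intro Min_le) auto
      then have "m k \<le> w k" unfolding m_def by (simp add: nth_append)
      then show False using k(2) by simp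
    qed
  qed
  ultimately show ?thesis by blast
qed



lemma closed_local:
  assumes "cantor_closed L" "S \<subseteq> L"
    and "\<forall>w\<in>L. \<forall>w'\<in>L. (\<forall>i<N. w i = w' i) \<longrightarrow> w \<in> S \<longrightarrow> w' \<in> S"
  shows "cantor_closed S"
  unfolding cantor_closed_def
proof (intro allI impI)
  fix w assume H: "\<forall>n. \<exists>w'\<in>S. \<forall>i<n. w' i = w i"
  have "\<forall>n. \<exists>w'\<in>L. \<forall>i<n. w' i = w i"
  proof
    fix n
    obtain w' where "w' \<in> S" "\<forall>i<n. w' i = w i" using H by blast
    then show "\<exists>w'\<in>L. \<forall>i<n. w' i = w i" using assms(2) by blast
  qed
  then have "w \<in> L" using assms(1) unfolding cantor_closed_def by blast
  obtain w' where w': "w' \<in> S" "\<forall>i<N. w' i = w i" using H by blast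
  have "w' \<in> L" using w'(1) assms(2) by blast
  from assms(3) this \<open>w \<in> L\<close> have "(\<forall>i<N. w' i = w i) \<longrightarrow> w' \<in> S \<longrightarrow> w \<in> S" by blast
  then show "w \<in> S" using w' by blast
qed





locale sett =
  fixes L :: "(nat \<Rightarrow> 'a::{linorder,finite}) set" and \<mu> :: "(nat \<Rightarrow> 'a) measure"
  assumes shift: "is_shift L" and borel: "borel_on L \<mu>" and P: "prob_space \<mu>"
    and nonatomic: "\<forall>w\<in>L. emeasure \<mu> {w} = 0"
begin

sublocale prob_space \<mu> by (rule P)

definition LT where "LT p = {w\<in>L. ltp w p}"
definition LE where "LE p = {w\<in>L. ltp w p \<or> agr w p}"
definition D where "D w = {y\<in>L. lex_le y w}"

lemma spaceL: "space \<mu> = L" using borel by (simp add: borel_on_def)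
lemma setsL: "sets \<mu> = sigma_sets L (range (Cyl L))" using borel by (simp add: borel_on_def)
lemma closedL: "cantor_closed L" using shift by (simp add: is_shift_def)
lemma L_ne: "L \<noteq> {}" using not_empty spaceL by simp
lemma measure_L: "measure \<mu> L = 1" using prob_space spaceL by simp

lemma Cyl_eq: "Cyl L p = {w\<in>L. agr w p}" by (simp add: Cyl_def agr_def)

lemma Cyl_sets: "Cyl L p \<in> sets \<mu>" unfolding setsL by (rule sigma_sets.Basic) simp

lemma LT_snoc: "LT (p @ [c]) = LT p \<union> (\<Union>c'\<in>{c'. c' < c}. Cyl L (p @ [c']))"
  by (auto simp: LT_def ltp_snoc Cyl_eq agr_snoc)

lemma LT_sets: "LT p \<in> sets \<mu>"
proof (induction p rule: rev_induct)
  case Nil then show ?case by (simp add: LT_def)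
next
  case (snoc c p)
  have "(\<Union>c'\<in>{c'. c' < c}. Cyl L (p @ [c'])) \<in> sets \<mu>"
    by (intro sets.finite_UN) (auto simp: Cyl_sets)
  then show ?case unfolding LT_snoc using snoc by simp
qed

lemma LE_eq: "LE p = LT p \<union> Cyl L p" by (auto simp: LE_def LT_def Cyl_eq)
lemma LE_sets: "LE p \<in> sets \<mu>" unfolding LE_eq using LT_sets Cyl_sets by simp
lemma LT_LE_disj: "LT p \<inter> Cyl L p = {}" using trich by (auto simp: LT_def Cyl_eq)
lemma measure_LE: "measure \<mu> (LE p) = measure \<mu> (LT p) + measure \<mu> (Cyl L p)"
  unfolding LE_eq by (rule finite_measure_Union[OF LT_sets Cyl_sets LT_LE_disj])

lemma D_eq: "D w = (\<Inter>n. LE (map w [0..<n]))"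
  using lex_char(2)[of w "\<lambda>n. map w [0..<n]", OF pre_P] by (auto simp: D_def LE_def)

lemma D_sets: "D w \<in> sets \<mu>"
  unfolding D_eq by (rule sets.countable_INT) (auto simp: LE_sets)

lemma single_eq: assumes "w \<in> L" shows "{w} = (\<Inter>n. Cyl L (map w [0..<n]))"
proof
  show "{w} \<subseteq> (\<Inter>n. Cyl L (map w [0..<n]))" using assms by (auto simp: Cyl_eq agr_def)
next
  show "(\<Inter>n. Cyl L (map w [0..<n])) \<subseteq> {w}"
  proof
    fix y assume "y \<in> (\<Inter>n. Cyl L (map w [0..<n]))"
    then have "\<forall>n. agr y (map w [0..<n])" by (auto simp: Cyl_eq)
    then have "y i = w i" for i by (drule_tac x="Suc i" in spec) (auto simp: agr_def simp del: upt_Suc)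
    then show "y \<in> {w}" by auto
  qed
qed

lemma single_sets: "w \<in> L \<Longrightarrow> {w} \<in> sets \<mu>"
  unfolding single_eq by (rule sets.countable_INT) (auto simp: Cyl_sets)

lemma single_0: "w \<in> L \<Longrightarrow> measure \<mu> {w} = 0"
  using nonatomic by (simp add: measure_def)

lemma lexmin_prop: "lexmin L \<in> L \<and> (\<forall>w'\<in>L. lex_le (lexmin L) w')"
proof -
  obtain m where m: "m \<in> L" "\<forall>w\<in>L. lex_le m w" using closed_min[OF closedL L_ne] by blast
  have "\<exists>!m. m \<in> L \<and> (\<forall>w\<in>L. lex_le m w)"
    using m lex_le_antisym by blast
  then show ?thesis unfolding lexmin_def by (rule theI')
qed

lemma phi_mu_eq: "phi_mu \<mu> L w = measure \<mu> (D w)"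
  unfolding phi_mu_def D_def using lexmin_prop by metis

lemma meas_pos: "Cyl L p \<noteq> {} \<Longrightarrow> emeasure \<mu> (Cyl L p) > 0 \<Longrightarrow> measure \<mu> (Cyl L p) > 0"
  by (simp add: emeasure_eq_measure)

end




context sett begin

lemma LT_Nil: "LT [] = {}" by (simp add: LT_def)
lemma LE_Nil: "LE [] = L" by (simp add: LE_def)

lemma greedy_step:
  assumes "measure \<mu> (LT p) \<le> x" "x < measure \<mu> (LE p)"
    and c: "c = Max {c. measure \<mu> (LT (p @ [c])) \<le> x}"
  shows "measure \<mu> (LT (p @ [c])) \<le> x \<and> x < measure \<mu> (LE (p @ [c]))"
proof -
  let ?C = "{c. measure \<mu> (LT (p @ [c])) \<le> x}"
  define cm where "cm = Min (UNIV :: 'a set)"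
  have "LT (p @ [cm]) = LT p"
  proof -
    have "\<not> a < cm" for a :: 'a unfolding cm_def using Min_le[of UNIV a] by auto
    then show ?thesis by (auto simp: LT_def ltp_snoc)
  qed
  then have "cm \<in> ?C" using assms(1) by simp
  then have "?C \<noteq> {}" by auto
  then have cC: "c \<in> ?C" unfolding c by (intro Max_in) auto
  have cmax: "c' \<in> ?C \<Longrightarrow> c' \<le> c" for c' unfolding c by (intro Max_ge) auto
  have "x < measure \<mu> (LE (p @ [c]))"
  proof (cases "\<exists>c'. c < c'")
    case True
    define c' where "c' = Min {c'. c < c'}"
    have "c' \<in> {c'. c < c'}" unfolding c'_def using True by (intro Min_in) auto
    then have cc': "c < c'" by simp
    have c'min: "c < a \<Longrightarrow> c' \<le> a" for a unfolding c'_def by (intro Min_le) auto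
    have iff: "a < c' \<longleftrightarrow> a \<le> c" for a using cc' c'min[of a] by (metis leD not_le_imp_less order_le_less_trans)
    have "c' \<notin> ?C" using cmax cc' by force
    then have "x < measure \<mu> (LT (p @ [c']))" by simp
    moreover have "LT (p @ [c']) = LE (p @ [c])"
      unfolding LT_def LE_def ltp_snoc agr_snoc iff by auto
    ultimately show ?thesis by simp
  next
    case False
    then have "a \<le> c" for a by (simp add: not_less)
    then have "LE (p @ [c]) = LE p" unfolding LE_def ltp_snoc agr_snoc
      by (auto simp: order.order_iff_strict)
    then show ?thesis using assms(2) by simp
  qed
  then show ?thesis using cC by simp
qed

primrec gp :: "real \<Rightarrow> nat \<Rightarrow> 'a list" where
  "gp x 0 = []"
| "gp x (Suc n) = gp x n @ [Max {c. measure \<mu> (LT (gp x n @ [c])) \<le> x}]"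

lemma gp_length[simp]: "length (gp x n) = n"
  by (induction n) auto

lemma gp_inv:
  assumes "0 \<le> x" "x < 1"
  shows "measure \<mu> (LT (gp x n)) \<le> x \<and> x < measure \<mu> (LE (gp x n))"
proof (induction n)
  case 0 then show ?case using assms by (simp add: LT_Nil LE_Nil measure_L)
next
  case (Suc n)
  then show ?case using greedy_step[OF _ _ refl, of "gp x n" x] by simp
qed

lemma gp_nth: "i < n \<Longrightarrow> gp x n ! i = gp x (Suc i) ! i"
proof (induction n)
  case 0 then show ?case by simp
next
  case (Suc n)
  show ?case
  proof (cases "i < n")
    case True
    then have "gp x (Suc n) ! i = gp x n ! i" by (simp add: nth_append)
    then show ?thesis using Suc True by simp
  next
    case False
    then have "i = n" using Suc by simp
    then show ?thesis by simp
  qed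
qed

definition wst where "wst x = (\<lambda>i. gp x (Suc i) ! i)"

lemma agr_wst: "agr (wst x) (gp x n) \<and> length (gp x n) = n"
  unfolding agr_def gp_length
proof (intro conjI allI impI refl)
  fix i assume "i < n"
  then show "wst x i = gp x n ! i" unfolding wst_def using gp_nth[of i n x] by simp
qed

lemma LE_dec: "LE (gp x (Suc n)) \<subseteq> LE (gp x n)"
  by (auto simp: LE_def ltp_snoc agr_snoc)

lemma LT_inc: "LT (gp x n) \<subseteq> LT (gp x (Suc n))"
  by (auto simp: LT_def ltp_snoc agr_snoc)

lemma exist:
  assumes "0 \<le> x" "x < 1"
  shows "wst x \<in> L \<and> measure \<mu> (D (wst x)) = x \<and>
         (\<forall>w'\<in>L. lex_less (wst x) w' \<longrightarrow> x < measure \<mu> (D w'))"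
proof -
  let ?w = "wst x"
  note inv = gp_inv[OF assms]
  have "\<forall>n. \<exists>w'\<in>L. \<forall>i<n. w' i = ?w i"
  proof
    fix n
    have "measure \<mu> (LT (gp x n)) < measure \<mu> (LE (gp x n))" using inv[of n] by linarith
    then have "Cyl L (gp x n) \<noteq> {}" using measure_LE[of "gp x n"] by auto
    then obtain w' where "w' \<in> L" "agr w' (gp x n)" by (auto simp: Cyl_eq)
    then show "\<exists>w'\<in>L. \<forall>i<n. w' i = ?w i" using agr_wst[of x n] unfolding agr_def by auto
  qed
  then have wL: "?w \<in> L" using closedL unfolding cantor_closed_def by blast
  have Deq: "D ?w = (\<Inter>n. LE (gp x n))"
    using lex_char(2)[of ?w "gp x", OF agr_wst] by (auto simp: D_def LE_def)
  have ltq: "{y\<in>L. lex_less y ?w} = (\<Union>n. LT (gp x n))"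
    using lex_char(1)[of ?w "gp x", OF agr_wst] by (auto simp: LT_def)
  have lim1: "(\<lambda>n. measure \<mu> (LE (gp x n))) \<longlonglongrightarrow> measure \<mu> (\<Inter>n. LE (gp x n))"
    by (rule finite_Lim_measure_decseq) (auto simp: LE_sets intro!: decseq_SucI LE_dec)
  have ge: "x \<le> measure \<mu> (D ?w)"
    unfolding Deq by (rule LIMSEQ_le_const[OF lim1]) (use inv in \<open>auto intro: less_imp_le\<close>)
  have lim2: "(\<lambda>n. measure \<mu> (LT (gp x n))) \<longlonglongrightarrow> measure \<mu> (\<Union>n. LT (gp x n))"
    by (rule finite_Lim_measure_incseq) (auto simp: LT_sets intro!: incseq_SucI LT_inc)
  have le1: "measure \<mu> (\<Union>n. LT (gp x n)) \<le> x"
    by (rule LIMSEQ_le_const2[OF lim2]) (use inv in auto)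
  have Usets: "(\<Union>n. LT (gp x n)) \<in> sets \<mu>" by (auto simp: LT_sets)
  have "D ?w \<subseteq> (\<Union>n. LT (gp x n)) \<union> {?w}"
    using ltq by (auto simp: D_def lex_le_def)
  then have "measure \<mu> (D ?w) \<le> measure \<mu> ((\<Union>n. LT (gp x n)) \<union> {?w})"
    using finite_measure_mono[OF _ sets.Un[OF Usets single_sets[OF wL]]] by blast
  also have "\<dots> \<le> measure \<mu> (\<Union>n. LT (gp x n)) + measure \<mu> {?w}"
    by (intro measure_Un_le Usets single_sets wL)
  also have "\<dots> \<le> x" using le1 single_0[OF wL] by simp
  finally have le: "measure \<mu> (D ?w) \<le> x" .
  have gt: "x < measure \<mu> (D w')" if w'L: "w' \<in> L" and lt: "lex_less ?w w'" for w'
  proof -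
    obtain k where k: "\<forall>i<k. ?w i = w' i" "?w k < w' k" using lt by (auto simp: lex_less_def)
    have "LE (gp x (Suc k)) \<subseteq> D w'"
    proof
      fix y assume y: "y \<in> LE (gp x (Suc k))"
      then have yL: "y \<in> L" by (simp add: LE_def)
      from y have "ltp y (gp x (Suc k)) \<or> agr y (gp x (Suc k))" by (simp add: LE_def)
      then have "lex_less y w'"
      proof
        assume "ltp y (gp x (Suc k))"
        then have "lex_less y ?w" using ltp_agr_less agr_wst by blast
        then show ?thesis using lt lex_less_trans by blast
      next
        assume "agr y (gp x (Suc k))"
        then have "agr y (gp x (Suc k)) \<and> agr ?w (gp x (Suc k))" using agr_wst by blast
        then have "\<forall>i<Suc k. y i = ?w i" unfolding agr_def gp_length by metis
        then show ?thesis unfolding lex_less_def using k by (intro exI[of _ k]) auto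
      qed
      then show "y \<in> D w'" using yL by (simp add: D_def lex_le_def)
    qed
    then have "measure \<mu> (LE (gp x (Suc k))) \<le> measure \<mu> (D w')"
      by (intro finite_measure_mono D_sets)
    then show ?thesis using inv[of "Suc k"] by linarith
  qed
  show ?thesis using wL ge le gt by auto
qed

end




lemma gtp_local: "\<forall>i<length p. w i = w' i \<Longrightarrow> gtp w p \<Longrightarrow> gtp w' p"
proof -
  assume H: "\<forall>i<length p. w i = w' i" and "gtp w p"
  then obtain i where i: "i < length p" "\<forall>j<i. w j = p ! j" "w i > p ! i" by (auto simp: gtp_def)
  then show ?thesis using H unfolding gtp_def by (intro exI[of _ i]) auto
qed

lemma agr_local: "\<forall>i<length p. w i = w' i \<Longrightarrow> agr w p \<Longrightarrow> agr w' p"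
  unfolding agr_def by auto

lemma shift_lex_less:
  assumes "y 0 = w 0"
  shows "lex_less (shiftmap y) (shiftmap w) \<longleftrightarrow> lex_less y w"
proof
  assume "lex_less (shiftmap y) (shiftmap w)"
  then obtain n where n: "\<forall>i<n. y (Suc i) = w (Suc i)" "y (Suc n) < w (Suc n)"
    by (auto simp: lex_less_def shiftmap_def)
  have "\<forall>i<Suc n. y i = w i"
  proof (intro allI impI)
    fix i assume "i < Suc n"
    then show "y i = w i" using n assms by (cases i) auto
  qed
  then show "lex_less y w" unfolding lex_less_def using n by blast
next
  assume "lex_less y w"
  then obtain n where n: "\<forall>i<n. y i = w i" "y n < w n" by (auto simp: lex_less_def)
  have "n \<noteq> 0"
  proof
    assume "n = 0" then show False using n(2) assms by simp
  qed
  then obtain m where m: "n = Suc m" by (cases n) auto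
  show "lex_less (shiftmap y) (shiftmap w)" unfolding lex_less_def shiftmap_def
    using n m by (intro exI[of _ m]) auto
qed

lemma shift_eq:
  assumes "y 0 = w 0" shows "shiftmap y = shiftmap w \<longleftrightarrow> y = w"
proof
  assume H: "shiftmap y = shiftmap w"
  show "y = w"
  proof
    fix i show "y i = w i"
    proof (cases i)
      case 0 then show ?thesis using assms by simp
    next
      case (Suc j) then show ?thesis using fun_cong[OF H, of j] by (simp add: shiftmap_def)
    qed
  qed
qed simp

lemma shift_lex_le: "y 0 = w 0 \<Longrightarrow> lex_le (shiftmap y) (shiftmap w) \<longleftrightarrow> lex_le y w"
  unfolding lex_le_def using shift_lex_less shift_eq by blast

lemma funpow_shift: "(shiftmap ^^ n) w i = w (n + i)"
  by (induction n arbitrary: i) (auto simp: shiftmap_def)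

context sett begin

lemma shift_in: "w \<in> L \<Longrightarrow> shiftmap w \<in> L" using shift by (auto simp: is_shift_def)

lemma funpow_in: "w \<in> L \<Longrightarrow> (shiftmap ^^ n) w \<in> L"
  by (induction n) (auto intro: shift_in)

lemma Fact_Cyl: assumes "v \<in> Fact L" shows "Cyl L v \<noteq> {}"
proof -
  obtain w n where w: "w \<in> L" "v = map w [n..<n + length v]" using assms by (auto simp: Fact_def)
  have "agr ((shiftmap ^^ n) w) v"
    unfolding agr_def funpow_shift
  proof (intro allI impI)
    fix i assume "i < length v"
    then show "w (n + i) = v ! i" using w(2) by (metis add_diff_cancel_left' nth_map_upt)
  qed
  then show ?thesis using funpow_in[OF w(1)] by (auto simp: Cyl_eq)
qed

lemma phi_inv_prop:
  assumes "0 \<le> x" "x < 1"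
  shows "phi_inv \<mu> L (x, False) \<in> L \<and> measure \<mu> (D (phi_inv \<mu> L (x, False))) = x \<and>
    (\<forall>w'\<in>L. lex_less (phi_inv \<mu> L (x, False)) w' \<longrightarrow> x < measure \<mu> (D w'))"
proof -
  define w0 where "w0 = wst x"
  note ex = exist[OF assms, folded w0_def]
  have h0: "phi_hat \<mu> L w0 = (x, False)"
    unfolding phi_hat_def phi_mu_eq using ex by force
  have uniq: "w1 = w0" if "w1 \<in> L" "phi_hat \<mu> L w1 = (x, False)" for w1
  proof (rule ccontr)
    assume ne: "w1 \<noteq> w0"
    have m1: "measure \<mu> (D w1) = x" and f1: "\<not> (\<exists>w'\<in>L. lex_less w1 w' \<and> phi_mu \<mu> L w' = phi_mu \<mu> L w1)"
      using that(2) unfolding phi_hat_def phi_mu_eq by auto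
    from lex_less_total[OF ne] show False
    proof
      assume "lex_less w1 w0"
      then show False using f1 ex m1 unfolding phi_mu_eq by auto
    next
      assume "lex_less w0 w1"
      then show False using ex m1 that(1) by auto
    qed
  qed
  have "phi_inv \<mu> L (x, False) = w0"
    unfolding phi_inv_def
  proof (rule the_equality)
    show "w0 \<in> L \<and> phi_hat \<mu> L w0 = (x, False)" using ex h0 by simp
  next
    fix w1 assume "w1 \<in> L \<and> phi_hat \<mu> L w1 = (x, False)"
    then show "w1 = w0" using uniq by blast
  qed
  then show ?thesis using ex by simp
qed

lemma H1a: "w \<in> L \<Longrightarrow> agr w v \<Longrightarrow> LT v \<subseteq> D w"
  using ltp_agr_less by (auto simp: LT_def D_def lex_le_def)

lemma H1b: "w \<in> L \<Longrightarrow> agr w v \<Longrightarrow> D w \<subseteq> LE v"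
  using agr_gtp_less trich not_lex_le by (auto simp: LE_def D_def) blast

lemma H2: "w \<in> L \<Longrightarrow> ltp w v \<Longrightarrow> D w \<subseteq> LT v"
  using ltp_agr_less ltp_gtp_less trich not_lex_le by (auto simp: LT_def D_def) blast

lemma H3: "w \<in> L \<Longrightarrow> gtp w v \<Longrightarrow> LE v \<subseteq> D w"
  using agr_gtp_less ltp_gtp_less by (auto simp: LE_def D_def lex_le_def)

lemma measure_D_le:
  assumes "m \<in> L" "D m \<subseteq> S \<union> {m}" "S \<in> sets \<mu>"
  shows "measure \<mu> (D m) \<le> measure \<mu> S"
proof -
  have "measure \<mu> (D m) \<le> measure \<mu> (S \<union> {m})"
    using finite_measure_mono[OF assms(2) sets.Un[OF assms(3) single_sets[OF assms(1)]]] .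
  also have "\<dots> \<le> measure \<mu> S + measure \<mu> {m}"
    by (intro measure_Un_le assms(3) single_sets assms(1))
  finally show ?thesis using single_0[OF assms(1)] by simp
qed

lemma Cyl_closed: "cantor_closed (Cyl L v)"
  by (rule closed_local[OF closedL, where N="length v"]) (auto simp: Cyl_eq agr_def)

lemma A_closed: "cantor_closed {w\<in>L. gtp w v}"
  by (rule closed_local[OF closedL, where N="length v"]) (auto intro: gtp_local)

lemma interval_char:
  assumes ne: "Cyl L v \<noteq> {}" and x: "0 \<le> x" "x < 1"
  shows "phi_inv \<mu> L (x, False) \<in> Cyl L v \<longleftrightarrow> measure \<mu> (LT v) \<le> x \<and> x < measure \<mu> (LE v)"
proof -
  define w where "w = phi_inv \<mu> L (x, False)"
  note pw = phi_inv_prop[OF x, folded w_def]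
  show ?thesis unfolding w_def[symmetric]
  proof
    assume "w \<in> Cyl L v"
    then have ag: "agr w v" by (simp add: Cyl_eq)
    have a: "measure \<mu> (LT v) \<le> x"
      using finite_measure_mono[OF H1a[OF _ ag] D_sets] pw by auto
    have b: "x \<le> measure \<mu> (LE v)"
      using finite_measure_mono[OF H1b[OF _ ag] LE_sets] pw by auto
    have "x \<noteq> measure \<mu> (LE v)"
    proof
      assume xb: "x = measure \<mu> (LE v)"
      show False
      proof (cases "{y\<in>L. gtp y v} = {}")
        case True
        then have "LE v = L" using trich by (auto simp: LE_def)
        then show False using xb x measure_L by simp
      next
        case False
        obtain m where m: "m \<in> {y\<in>L. gtp y v}" "\<forall>y\<in>{y\<in>L. gtp y v}. lex_le m y"
          using closed_min[OF A_closed False] by blast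
        have "lex_less w m" using agr_gtp_less ag m(1) by auto
        then have "x < measure \<mu> (D m)" using pw m(1) by auto
        moreover have "D m \<subseteq> LE v \<union> {m}"
        proof
          fix y assume y: "y \<in> D m"
          show "y \<in> LE v \<union> {m}"
          proof (cases "y = m")
            case False
            then have "lex_less y m" using y by (auto simp: D_def lex_le_def)
            then have "\<not> gtp y v" using m(2) y not_lex_le by (auto simp: D_def)
            then show ?thesis using y trich by (auto simp: D_def LE_def)
          qed simp
        qed
        then have "measure \<mu> (D m) \<le> measure \<mu> (LE v)"
          using m(1) by (intro measure_D_le LE_sets) auto
        ultimately show False using xb by simp
      qed
    qed
    then show "measure \<mu> (LT v) \<le> x \<and> x < measure \<mu> (LE v)" using a b by simp
  next
    assume ab: "measure \<mu> (LT v) \<le> x \<and> x < measure \<mu> (LE v)"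
    have "\<not> ltp w v"
    proof
      assume lt: "ltp w v"
      have "x \<le> measure \<mu> (LT v)"
        using finite_measure_mono[OF H2[OF _ lt] LT_sets] pw by auto
      then have xa: "x = measure \<mu> (LT v)" using ab by simp
      obtain m where m: "m \<in> Cyl L v" "\<forall>y\<in>Cyl L v. lex_le m y"
        using closed_min[OF Cyl_closed ne] by blast
      have mL: "m \<in> L" using m(1) by (simp add: Cyl_eq)
      have "lex_less w m" using ltp_agr_less lt m(1) by (auto simp: Cyl_eq)
      then have "x < measure \<mu> (D m)" using pw mL by auto
      moreover have "D m \<subseteq> LT v \<union> {m}"
      proof
        fix y assume y: "y \<in> D m"
        show "y \<in> LT v \<union> {m}"
        proof (cases "y = m")
          case False
          then have yl: "lex_less y m" using y by (auto simp: D_def lex_le_def)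
          then have "\<not> agr y v" using m(2) y not_lex_le by (auto simp: D_def Cyl_eq)
          moreover have "\<not> gtp y v"
            using agr_gtp_less[of m v y] m(1) yl lex_less_asym by (auto simp: Cyl_eq)
          ultimately show ?thesis using y trich by (auto simp: D_def LT_def)
        qed simp
      qed
      then have "measure \<mu> (D m) \<le> measure \<mu> (LT v)"
        using mL by (intro measure_D_le LT_sets) auto
      ultimately show False using xa by simp
    qed
    moreover have "\<not> gtp w v"
    proof
      assume gt: "gtp w v"
      have "measure \<mu> (LE v) \<le> x"
        using finite_measure_mono[OF H3[OF _ gt] D_sets] pw by auto
      then show False using ab by simp
    qed
    ultimately show "w \<in> Cyl L v" using trich pw by (auto simp: Cyl_eq)
  qed
qed

end




context sett begin

lemma D_split:
  assumes "w \<in> L" "agr w p"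
  shows "measure \<mu> (D w) = measure \<mu> (LT p) + measure \<mu> (Cyl L p \<inter> D w)"
proof -
  have "D w = LT p \<union> (Cyl L p \<inter> D w)"
    using H1a[OF assms] H1b[OF assms] LE_eq by auto
  moreover have "LT p \<inter> (Cyl L p \<inter> D w) = {}" using LT_LE_disj by auto
  ultimately show ?thesis
    using finite_measure_Union[OF LT_sets sets.Int[OF Cyl_sets D_sets]] by metis
qed

lemma fact_y:
  assumes "y \<in> L" "agr (shiftmap y) u"
  shows "y 0 # u \<in> Fact L"
proof -
  have eq: "y 0 # u = map y [0..<0 + length (y 0 # u)]"
  proof (rule nth_equalityI)
    show "length (y 0 # u) = length (map y [0..<0 + length (y 0 # u)])" by simp
  next
    fix i assume i: "i < length (y 0 # u)"
    show "(y 0 # u) ! i = map y [0..<0 + length (y 0 # u)] ! i"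
    proof (cases i)
      case 0 then show ?thesis using i by (simp del: upt_Suc)
    next
      case (Suc j)
      then have "j < length u" using i by simp
      then have "u ! j = y (Suc j)" using assms(2) by (simp add: agr_def shiftmap_def)
      then show ?thesis using Suc i by (simp del: upt_Suc)
    qed
  qed
  have "\<exists>w\<in>L. \<exists>n. y 0 # u = map w [n..<n + length (y 0 # u)]"
  proof (rule bexI)
    show "\<exists>n. y 0 # u = map y [n..<n + length (y 0 # u)]" by (rule exI[of _ 0]) (rule eq)
    show "y \<in> L" by (rule assms(1))
  qed
  then show ?thesis unfolding Fact_def by simp
qed

lemma preimage:
  assumes F: "a0 # u \<in> Fact L" and nls: "\<not> left_special L u" and w: "w \<in> Cyl L (a0 # u)"
  shows "Cyl L (a0 # u) \<inter> D w = {y\<in>L. shiftmap y \<in> Cyl L u \<inter> D (shiftmap w)}"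
proof -
  have wL: "w \<in> L" and w0: "w 0 = a0" using w by (auto simp: Cyl_eq agr_def)
  show ?thesis
  proof (intro set_eqI iffI)
    fix y assume y: "y \<in> Cyl L (a0 # u) \<inter> D w"
    then have yL: "y \<in> L" and ag: "agr y (a0 # u)" and le: "lex_le y w"
      by (auto simp: Cyl_eq D_def)
    have y0: "y 0 = a0" using ag by (auto simp: agr_def)
    have "agr (shiftmap y) u" using ag by (auto simp: agr_def shiftmap_def)
    moreover have "lex_le (shiftmap y) (shiftmap w)" using shift_lex_le[of y w] y0 w0 le by simp
    ultimately show "y \<in> {y\<in>L. shiftmap y \<in> Cyl L u \<inter> D (shiftmap w)}"
      using yL shift_in by (auto simp: Cyl_eq D_def)
  next
    fix y assume "y \<in> {y\<in>L. shiftmap y \<in> Cyl L u \<inter> D (shiftmap w)}"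
    then have yL: "y \<in> L" and ag: "agr (shiftmap y) u" and le: "lex_le (shiftmap y) (shiftmap w)"
      by (auto simp: Cyl_eq D_def)
    have "y 0 # u \<in> Fact L" by (rule fact_y[OF yL ag])
    then have y0: "y 0 = a0" using F nls unfolding left_special_def by blast
    have "agr y (a0 # u)"
      unfolding agr_def
    proof (intro allI impI)
      fix i assume i: "i < length (a0 # u)"
      show "y i = (a0 # u) ! i"
      proof (cases i)
        case 0 then show ?thesis using y0 by simp
      next
        case (Suc j) then show ?thesis using ag i by (simp add: agr_def shiftmap_def)
      qed
    qed
    moreover have "lex_le y w" using shift_lex_le[of y w] y0 w0 le by simp
    ultimately show "y \<in> Cyl L (a0 # u) \<inter> D w" using yL by (auto simp: Cyl_eq D_def)
  qed
qed

lemma translation: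
  assumes F: "a0 # u \<in> Fact L" and nls: "\<not> left_special L u"
    and inv: "\<forall>B\<in>sets \<mu>. emeasure \<mu> {w\<in>L. shiftmap w \<in> B} = emeasure \<mu> B"
    and x: "0 \<le> x" "x < 1" and wc: "phi_inv \<mu> L (x, False) \<in> Cyl L (a0 # u)"
  shows "T_L \<mu> L x = x + (measure \<mu> (LT u) - measure \<mu> (LT (a0 # u)))"
proof -
  define w where "w = phi_inv \<mu> L (x, False)"
  note pw = phi_inv_prop[OF x, folded w_def]
  have wc': "w \<in> Cyl L (a0 # u)" using wc by (simp add: w_def)
  have wL: "w \<in> L" and ag: "agr w (a0 # u)" using wc' by (auto simp: Cyl_eq)
  have sL: "shiftmap w \<in> L" using shift_in wL by blast
  have sag: "agr (shiftmap w) u" using ag by (auto simp: agr_def shiftmap_def)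
  have T: "T_L \<mu> L x = measure \<mu> (D (shiftmap w))"
    unfolding T_L_def w_def[symmetric] phi_hat_def phi_mu_eq by simp
  have e1: "measure \<mu> (D (shiftmap w)) = measure \<mu> (LT u) + measure \<mu> (Cyl L u \<inter> D (shiftmap w))"
    by (rule D_split[OF sL sag])
  have e2: "x = measure \<mu> (LT (a0 # u)) + measure \<mu> (Cyl L (a0 # u) \<inter> D w)"
    using D_split[OF wL ag] pw by simp
  have Bs: "Cyl L u \<inter> D (shiftmap w) \<in> sets \<mu>" by (rule sets.Int[OF Cyl_sets D_sets])
  have "emeasure \<mu> (Cyl L (a0 # u) \<inter> D w) = emeasure \<mu> (Cyl L u \<inter> D (shiftmap w))"
    unfolding preimage[OF F nls wc'] using inv Bs by blast
  then have e3: "measure \<mu> (Cyl L (a0 # u) \<inter> D w) = measure \<mu> (Cyl L u \<inter> D (shiftmap w))"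
    by (simp add: measure_def)
  show ?thesis using T e1 e2 e3 by simp
qed

end

theorem mainTheorem12:
  fixes L :: "(nat \<Rightarrow> 'a::{linorder,finite}) set"
    and \<mu> :: "(nat \<Rightarrow> 'a) measure"
  assumes shift: "is_shift L"
    and ls_long: "\<forall>n. \<exists>u. n \<le> length u \<and> left_special L u"
    and borel: "borel_on L \<mu>"
    and prob: "prob_space \<mu>"
    and invariant: "\<forall>B\<in>sets \<mu>. emeasure \<mu> {w\<in>L. shiftmap w \<in> B} = emeasure \<mu> B"
    and nonatomic: "\<forall>w\<in>L. emeasure \<mu> {w} = 0"
    and pos_cyl: "\<forall>v. Cyl L v \<noteq> {} \<longrightarrow> emeasure \<mu> (Cyl L v) > 0"
    and SP_null: "SP L \<inter> L \<in> sets \<mu> \<and> emeasure \<mu> (SP L \<inter> L) = 0"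
  shows "\<forall>v\<in>Vwords L.
           (\<exists>a b. a < b \<and> I_k \<mu> L v = {a..<b}) \<and>
           (\<exists>c. \<forall>x\<in>I_k \<mu> L v. T_L \<mu> L x = x + c)"
proof
  interpret S: sett L \<mu> by (rule sett.intro[OF shift borel prob nonatomic])
  fix v assume "v \<in> Vwords L"
  then obtain a0 u where v: "v = a0 # u" and F: "a0 # u \<in> Fact L" and nls: "\<not> left_special L u"
    unfolding Vwords_def by blast
  have ne: "Cyl L v \<noteq> {}" using S.Fact_Cyl F v by simp
  have pos: "measure \<mu> (Cyl L v) > 0" using S.meas_pos[OF ne] pos_cyl ne by blast
  define a where "a = measure \<mu> (S.LT v)"
  define b where "b = measure \<mu> (S.LE v)"
  have ab: "a < b" unfolding a_def b_def using S.measure_LE pos by simp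
  have a0': "0 \<le> a" unfolding a_def by simp
  have b1: "b \<le> 1"
  proof -
    have "S.LE v \<subseteq> L" by (auto simp: S.LE_def)
    then have "b \<le> measure \<mu> L" unfolding b_def
      using S.finite_measure_mono[of "S.LE v" L] sets.top[of \<mu>] S.spaceL by simp
    then show ?thesis using S.measure_L by simp
  qed
  have Ik: "I_k \<mu> L v = {a..<b}"
  proof (intro set_eqI iffI)
    fix x assume "x \<in> I_k \<mu> L v"
    then have x: "0 \<le> x" "x < 1" "phi_inv \<mu> L (x, False) \<in> Cyl L v" by (auto simp: I_k_def)
    then show "x \<in> {a..<b}" using S.interval_char[OF ne x(1,2)] unfolding a_def b_def by simp
  next
    fix x assume "x \<in> {a..<b}"
    then have x: "0 \<le> x" "x < 1" "a \<le> x" "x < b" using a0' b1 by auto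
    then show "x \<in> I_k \<mu> L v" using S.interval_char[OF ne x(1,2)] unfolding a_def b_def I_k_def
      by simp
  qed
  have "\<exists>c. \<forall>x\<in>I_k \<mu> L v. T_L \<mu> L x = x + c"
  proof (intro exI ballI)
    fix x assume "x \<in> I_k \<mu> L v"
    then have x: "0 \<le> x" "x < 1" "phi_inv \<mu> L (x, False) \<in> Cyl L (a0 # u)"
      by (auto simp: I_k_def v)
    show "T_L \<mu> L x = x + (measure \<mu> (S.LT u) - measure \<mu> (S.LT (a0 # u)))"
      by (rule S.translation[OF F nls invariant x])
  qed
  then show "(\<exists>a b. a < b \<and> I_k \<mu> L v = {a..<b}) \<and> (\<exists>c. \<forall>x\<in>I_k \<mu> L v. T_L \<mu> L x = x + c)"
    using ab Ik by blast
qed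


end
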